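(* For $i\in\{1,2\}$ let $\Psi_i=[A_i,B_i,C_i,D_i]\in\mathcal{RH}_\infty^{m_i\times k_i}$ with $A_1\in\mathbb{R}^{n_1\times n_1}$, $A_2\in\mathbb{R}^{n_2\times n_2}$, and let $M\in\mathbb{R}^{m_1\times m_2}$. Assume $\Psi_1^*(\zeta)M\Psi_2(\zeta)=0$ for all $\zeta\in\partial\mathbb D$, and that $(A_1,B_1)$ and $(A_2,B_2)$ are controllable. Then there exists $Z_{12}\in\mathbb{R}^{n_1\times n_2}$ such that $$\begin{pmatrix}A_1^\top Z_{12}A_2-Z_{12} & A_1^\top Z_{12}B_2\\ B_1^\top Z_{12}A_2 & B_1^\top Z_{12}B_2\end{pmatrix}=\begin{pmatrix}C_1&D_1\end{pmatrix}^\top M\begin{pmatrix}C_2&D_2\end{pmatrix}.$$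
   Context: $[A,B,C,D](\zeta)=C(\zeta I-A)^{-1}B+D$. $\mathcal{RH}_\infty$ here means the realization matrix $A$ has all eigenvalues in the open unit disc $\mathbb D$. $\Psi^*(\zeta)=\Psi(\zeta^{-1})^\top$; $\partial\mathbb D$ is the unit circle. *)

theory Defs
  imports "HOL-Analysis.Analysis"
begin

definition cmat :: "real^'n^'m \<Rightarrow> complex^'n^'m" where
  "cmat X = (\<chi> i j. complex_of_real (X $ i $ j))"

definition tf :: "real^'n^'n \<Rightarrow> real^'k^'n \<Rightarrow> real^'n^'m \<Rightarrow> real^'k^'m
                  \<Rightarrow> complex \<Rightarrow> complex^'k^'m" where
  "tf A B C D z =
     cmat C ** matrix_inv (mat z - cmat A) ** cmat B + cmat D"

definition schur_stable :: "real^'n^'n \<Rightarrow> bool" where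
  "schur_stable A \<longleftrightarrow> (\<forall>z::complex. det (mat z - cmat A) = 0 \<longrightarrow> cmod z < 1)"

fun mpow :: "real^'n^'n \<Rightarrow> nat \<Rightarrow> real^'n^'n" where
  "mpow A 0 = mat 1"
| "mpow A (Suc j) = A ** mpow A j"

definition controllable :: "real^'n^'n \<Rightarrow> real^'k^'n \<Rightarrow> bool" where
  "controllable A B \<longleftrightarrow>
     span {column i (mpow A j ** B) | i j. j < CARD('n)} = UNIV"

end

theory Submission
  imports Defs "Jordan_Normal_Form.Spectral_Radius"
begin


hide_const (open) Matrix.mat Matrix.vec Determinant.det Matrix.row
hide_fact (open) Matrix.vec_eq_iff

primrec cpow :: "complex^'n^'n \<Rightarrow> nat \<Rightarrow> complex^'n^'n" where
  "cpow X 0 = mat 1"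
| "cpow X (Suc j) = X ** cpow X j"

lemma cpow_Suc2: "cpow X (Suc k) = cpow X k ** X"
  by (induction k) (simp_all add: matrix_mul_assoc)

definition ix :: "nat \<Rightarrow> 'n::finite" where
  "ix = (SOME f. bij_betw f {0..<CARD('n)} (UNIV::'n set))"

lemma bij_ix: "bij_betw (ix :: nat \<Rightarrow> 'n::finite) {0..<CARD('n)} UNIV"
proof -
  have "\<exists>f. bij_betw f {0..<card (UNIV::'n set)} (UNIV::'n set)"
    by (rule ex_bij_betw_nat_finite) simp
  then show ?thesis unfolding ix_def by (rule someI_ex)
qed

definition jx :: "'n::finite \<Rightarrow> nat" where
  "jx = the_inv_into {0..<CARD('n)} ix"

lemma jx_lt: "jx (i::'n::finite) < CARD('n)"
  unfolding jx_def using bij_ix[where 'n='n]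
  by (metis atLeastLessThan_iff bij_betw_def iso_tuple_UNIV_I the_inv_into_into subsetI)

lemma ix_jx[simp]: "ix (jx (i::'n::finite)) = i"
  unfolding jx_def using bij_ix[where 'n='n]
  by (metis bij_betw_def f_the_inv_into_f iso_tuple_UNIV_I)

lemma jx_ix[simp]: "k < CARD('n) \<Longrightarrow> jx (ix k :: 'n::finite) = k"
  unfolding jx_def using bij_ix[where 'n='n]
  by (simp add: bij_betw_def the_inv_into_f_f)

lemma ix_inj: "k < CARD('n) \<Longrightarrow> l < CARD('n) \<Longrightarrow> (ix k :: 'n::finite) = ix l \<longleftrightarrow> k = l"
  by (metis jx_ix)

lemma sum_ix: "(\<Sum>k\<in>{0..<CARD('n)}. g (ix k :: 'n::finite)) = (\<Sum>l\<in>UNIV. g l)"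
  by (rule sum.reindex_bij_betw[OF bij_ix])

definition tomat :: "complex^'n^'n \<Rightarrow> complex mat" where
  "tomat X = Matrix.mat CARD('n) CARD('n) (\<lambda>(i,j). X $ ix i $ ix j)"

definition tovec :: "complex^'n \<Rightarrow> complex Matrix.vec" where
  "tovec w = Matrix.vec CARD('n) (\<lambda>i. w $ ix i)"

definition fromvec :: "complex Matrix.vec \<Rightarrow> complex^'n::finite" where
  "fromvec v = (\<chi> i. v $ jx i)"

lemma tomat_carrier: "tomat (X::complex^'n^'n) \<in> carrier_mat CARD('n) CARD('n)"
  unfolding tomat_def by simp

lemma tovec_carrier: "tovec (w::complex^'n) \<in> carrier_vec CARD('n)"
  unfolding tovec_def by simp


lemma tomat_mult: "tomat ((X::complex^'n^'n) ** Y) = tomat X * tomat Y"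
  by (rule eq_matI) (auto simp: tomat_def matrix_matrix_mult_def scalar_prod_def
      sum_ix[where g="\<lambda>l. X $ ix _ $ l * Y $ l $ ix _"] )

lemma tomat_dim[simp]: "dim_row (tomat (X::complex^'n^'n)) = CARD('n)" "dim_col (tomat X) = CARD('n)"
  by (simp_all add: tomat_def)

lemma tomat_one: "tomat (mat 1 :: complex^'n^'n) = 1\<^sub>m CARD('n)"
  by (rule eq_matI) (auto simp: tomat_def Finite_Cartesian_Product.mat_def ix_inj)

lemma tomat_cpow: "tomat (cpow (X::complex^'n^'n) k) = tomat X ^\<^sub>m k"
  by (induction k) (simp_all add: tomat_one cpow_Suc2 tomat_mult tomat_carrier del: cpow.simps(2))

lemma tovec_mult: "tovec ((X::complex^'n^'n) *v w) = tomat X *\<^sub>v tovec w"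
  by (rule eq_vecI) (auto simp: tomat_def tovec_def matrix_vector_mult_def scalar_prod_def
      sum_ix[where g="\<lambda>l. X $ ix _ $ l * w $ l"])

lemma fromvec_tovec[simp]: "fromvec (tovec (w::complex^'n)) = w"
  by (simp add: fromvec_def tovec_def vec_eq_iff jx_lt)

lemma tovec_fromvec: "v \<in> carrier_vec CARD('n) \<Longrightarrow> tovec (fromvec v :: complex^'n) = v"
  by (rule eq_vecI) (auto simp: fromvec_def tovec_def)

lemma tovec_smult: "tovec (e *s (w::complex^'n)) = e \<cdot>\<^sub>v tovec w"
  by (rule eq_vecI) (auto simp: tovec_def)

lemma tovec_zero: "tovec (w::complex^'n) = 0\<^sub>v CARD('n) \<longleftrightarrow> w = 0"
proof
  assume "tovec w = 0\<^sub>v CARD('n)"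
  then have "\<And>i::'n. tovec w $ jx i = 0" by (simp add: jx_lt)
  then have "\<And>i::'n. w $ i = 0" by (simp add: tovec_def jx_lt)
  then show "w = 0" by (simp add: Finite_Cartesian_Product.vec_eq_iff)
next
  assume "w = 0" then show "tovec w = 0\<^sub>v CARD('n)" by (auto simp: tovec_def)
qed

lemma eig_to_jnf:
  assumes "(X::complex^'n^'n) *v w = e *s w" "w \<noteq> 0"
  shows "eigenvalue (tomat X) e"
  unfolding eigenvalue_def eigenvector_def
  by (rule exI[of _ "tovec w"]) (use assms in \<open>auto simp: tomat_carrier tovec_carrier tovec_zero
      tovec_mult[symmetric] tovec_smult carrier_matD(1)[OF tomat_carrier]\<close>)

lemma eig_from_jnf:
  assumes "eigenvalue (tomat (X::complex^'n^'n)) e"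
  shows "\<exists>w. w \<noteq> 0 \<and> X *v w = e *s w"
proof -
  from assms obtain v where v: "v \<in> carrier_vec CARD('n)" "v \<noteq> 0\<^sub>v CARD('n)"
    "tomat X *\<^sub>v v = e \<cdot>\<^sub>v v"
    unfolding eigenvalue_def eigenvector_def using carrier_matD(1)[OF tomat_carrier] by auto
  let ?w = "fromvec v :: complex^'n"
  have "tovec (X *v ?w) = tovec (e *s ?w)"
    by (simp add: tovec_mult tovec_smult tovec_fromvec v)
  then have "X *v ?w = e *s ?w" by (metis fromvec_tovec)
  moreover have "?w \<noteq> 0" using v tovec_zero tovec_fromvec by metis
  ultimately show ?thesis by blast
qed


lemma mat_mv: "mat (c::'a::comm_ring_1) *v w = c *s w"
proof -
  have "(\<Sum>j\<in>UNIV. (if i = j then c else 0) * w $ j) = c * w $ i" for i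
  proof -
    have "(\<Sum>j\<in>UNIV. (if i = j then c else 0) * w $ j) = (\<Sum>j\<in>UNIV. if i = j then c * w $ j else 0)"
      by (rule sum.cong) auto
    then show ?thesis by simp
  qed
  then show ?thesis
    by (simp add: vec_eq_iff matrix_vector_mult_def Finite_Cartesian_Product.mat_def)
qed

lemma vec_eig_det:
  fixes X :: "complex^'n^'n"
  assumes "X *v w = e *s w" "w \<noteq> 0"
  shows "det (mat e - X) = 0"
proof -
  have me: "mat e *v w = e *s w" by (rule mat_mv)
  have "(mat e - X) *v w = 0"
    using assms(1) by (simp add: matrix_vector_mult_diff_rdistrib me)
  then have "\<not> inj ((*v) (mat e - X))"
    using assms(2) by (metis inj_eq matrix_vector_mult_0_right)
  then have "\<not> invertible (mat e - X)" using inj_matrix_vector_mult by blast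
  then show ?thesis using invertible_det_nz by blast
qed

definition mdiv :: "complex^'n^'n \<Rightarrow> real \<Rightarrow> complex^'n^'n" where
  "mdiv X r = (\<chi> i j. X $ i $ j / of_real r)"

lemma mdiv_mv: "(mdiv X r *v w) $ i = (X *v w) $ i / of_real r"
  by (simp add: mdiv_def matrix_vector_mult_def sum_divide_distrib)

lemma cpow_mdiv: "cpow (mdiv X r) k = (\<chi> i j. cpow X k $ i $ j / of_real r ^ k)"
proof (induction k)
  case 0 then show ?case by (simp add: vec_eq_iff)
next
  case (Suc k)
  have "cpow (mdiv X r) (Suc k) = mdiv X r ** cpow (mdiv X r) k" by simp
  also have "\<dots> = mdiv X r ** (\<chi> i j. cpow X k $ i $ j / of_real r ^ k)" by (simp only: Suc)
  also have "\<dots> = (\<chi> i j. cpow X (Suc k) $ i $ j / of_real r ^ (Suc k))"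
    by (simp add: mdiv_def vec_eq_iff matrix_matrix_mult_def sum_divide_distrib del: of_real_power)
  finally show ?case .
qed

lemma decay:
  fixes X :: "complex^'n^'n"
  assumes st: "\<And>z. det (mat z - X) = 0 \<Longrightarrow> cmod z < 1"
  shows "\<exists>c r. 0 < r \<and> r < 1 \<and> (\<forall>k i j. cmod (cpow X k $ i $ j) \<le> c * r^k)"
proof -
  let ?M = "tomat X"
  have n: "CARD('n) > 0" by simp
  have car: "?M \<in> carrier_mat CARD('n) CARD('n)" by (rule tomat_carrier)
  have ev1: "cmod e < 1" if "eigenvalue ?M e" for e
    using eig_from_jnf[OF that] vec_eig_det st by blast
  define \<rho> where "\<rho> = spectral_radius ?M"
  have "\<rho> \<in> norm ` spectrum ?M" unfolding \<rho>_def by (rule spectral_radius_mem_max(1)[OF car n])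
  then have \<rho>1: "\<rho> < 1" and \<rho>0: "0 \<le> \<rho>" using ev1 unfolding spectrum_def by auto
  define r where "r = (1 + \<rho>) / 2"
  have r: "0 < r" "r < 1" "\<rho> < r" using \<rho>1 \<rho>0 by (auto simp: r_def)
  define Y where "Y = mdiv X r"
  have carY: "tomat Y \<in> carrier_mat CARD('n) CARD('n)" by (rule tomat_carrier)
  have evY: "cmod e < 1" if ev: "eigenvalue (tomat Y) e" for e
  proof -
    obtain w where w: "w \<noteq> 0" "Y *v w = e *s w" using eig_from_jnf[OF ev] by blast
    have "X *v w = (of_real r * e) *s w"
    proof -
      have "(X *v w) $ i = ((of_real r * e) *s w) $ i" for i
      proof -
        have "(Y *v w) $ i = e * w $ i" using w(2) by simp
        then have "(X *v w) $ i / of_real r = e * w $ i" by (simp add: Y_def mdiv_mv)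
        then show ?thesis using r by (simp add: field_simps)
      qed
      then show ?thesis by (simp add: vec_eq_iff)
    qed
    then have "eigenvalue ?M (of_real r * e)" using eig_to_jnf w(1) by blast
    then have "norm (of_real r * e) \<le> \<rho>" unfolding \<rho>_def
      by (intro spectral_radius_mem_max(2)[OF car n]) (auto simp: spectrum_def)
    then have "r * cmod e \<le> \<rho>" using r by (simp add: norm_mult)
    then have "r * cmod e < r * 1" using r by linarith
    then show ?thesis using r by simp
  qed
  have "spectral_radius (tomat Y) < 1"
  proof -
    have "spectral_radius (tomat Y) \<in> norm ` spectrum (tomat Y)"
      by (rule spectral_radius_mem_max(1)[OF carY n])
    then show ?thesis using evY unfolding spectrum_def by auto
  qed
  from spectral_radius_jnf_norm_bound_less_1_upper_triangular[OF carY this]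
  obtain c where c: "\<And>k. norm_bound (tomat Y ^\<^sub>m k) c" by blast
  have "cmod (cpow X k $ i $ j) \<le> c * r^k" for k i j
  proof -
    have "cmod (cpow Y k $ i $ j) \<le> c"
    proof -
      have "tomat (cpow Y k) $$ (jx i, jx j) = cpow Y k $ i $ j"
        by (simp add: tomat_def jx_lt)
      moreover have "norm (tomat (cpow Y k) $$ (jx i, jx j)) \<le> c"
        using c[of k] unfolding tomat_cpow norm_bound_def using jx_lt[of i] jx_lt[of j]
        by (simp add: tomat_cpow[symmetric])
      ultimately show ?thesis by simp
    qed
    moreover have "cpow Y k $ i $ j = cpow X k $ i $ j / of_real r ^ k"
      by (simp add: Y_def cpow_mdiv)
    ultimately have "cmod (cpow X k $ i $ j) / r^k \<le> c"
      using r by (simp add: norm_divide norm_power)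
    then show ?thesis using r by (simp add: divide_le_eq mult.commute)
  qed
  then show ?thesis using r by blast
qed




definition smat :: "'a::semiring_1 \<Rightarrow> 'a^'n^'m \<Rightarrow> 'a^'n^'m" where
  "smat c X = (\<chi> i j. c * X $ i $ j)"

lemma smat_nth[simp]: "smat c X $ i $ j = c * X $ i $ j"
  by (simp add: smat_def)

lemma smat_mult_left: "smat (c::'a::comm_semiring_1) X ** Y = smat c (X ** Y)"
  by (simp add: vec_eq_iff matrix_matrix_mult_def sum_distrib_left mult.assoc)

lemma mult_smat_right: "X ** smat (c::'a::comm_semiring_1) Y = smat c (X ** Y)"
  by (simp add: vec_eq_iff matrix_matrix_mult_def sum_distrib_left mult_ac)

lemma mat_mult_left: "mat (c::'a::comm_semiring_1) ** X = smat c X"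
proof -
  have "mat c ** X = smat c (mat 1) ** X"
    by (rule arg_cong[where f="\<lambda>M. M ** X"]) (simp add: vec_eq_iff Finite_Cartesian_Product.mat_def)
  then show ?thesis by (simp add: smat_mult_left)
qed

lemma smat_smat[simp]: "smat c (smat d X) = smat (c * d) X"
  by (simp add: vec_eq_iff mult.assoc)

lemma smat_1[simp]: "smat 1 X = X"
  by (simp add: vec_eq_iff)

lemma smat_add: "smat c (X + Y) = smat c X + smat c Y"
  by (simp add: vec_eq_iff distrib_left)

lemma smat_diff: "smat (c::'a::comm_ring_1) (X - Y) = smat c X - smat c Y"
  by (simp add: vec_eq_iff right_diff_distrib)

lemma matrix_add_rdistrib': "((B::'a::semiring_1^_^_) + C) ** A = B ** A + C ** A"
  by (simp add: vec_eq_iff matrix_matrix_mult_def sum.distrib distrib_right)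

lemma sum_mult_left: "(\<Sum>k\<in>S. F k) ** (Y::'a::semiring_1^_^_) = (\<Sum>k\<in>S. F k ** Y)"
  by (induction S rule: infinite_finite_induct) (simp_all add: matrix_add_rdistrib')

lemma mult_sum_right: "(Y::'a::semiring_1^_^_) ** (\<Sum>k\<in>S. F k) = (\<Sum>k\<in>S. Y ** F k)"
  by (induction S rule: infinite_finite_induct) (simp_all add: matrix_add_ldistrib)

lemma matrix_sub_ldistrib': "(A::'a::ring_1^_^_) ** (B - C) = A ** B - A ** C"
  by (metis add_diff_cancel diff_add_cancel matrix_add_ldistrib)

lemma matrix_sub_rdistrib': "((B::'a::ring_1^_^_) - C) ** A = B ** A - C ** A"
  by (metis add_diff_cancel diff_add_cancel matrix_add_rdistrib')

lemma invertible_inv: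
  assumes "invertible (A::'a::semiring_1^'n^'m)"
  shows "A ** matrix_inv A = mat 1" "matrix_inv A ** A = mat 1"
  using someI_ex[OF assms[unfolded invertible_def]] unfolding matrix_inv_def by auto

lemma inv_unique:
  assumes "invertible (A::'a::semiring_1^'n^'n)" "Y ** A = mat 1"
  shows "matrix_inv A = Y"
  by (metis assms invertible_inv(1) matrix_mul_assoc matrix_mul_lid matrix_mul_rid)

lemma inv_commute:
  assumes "invertible (Q::'a::semiring_1^'n^'n)" "Q ** Y = Y ** Q"
  shows "matrix_inv Q ** Y = Y ** matrix_inv Q"
proof -
  have "matrix_inv Q ** Y = matrix_inv Q ** Y ** (Q ** matrix_inv Q)"
    by (simp add: invertible_inv[OF assms(1)])
  also have "\<dots> = matrix_inv Q ** (Q ** Y) ** matrix_inv Q"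
    by (simp add: assms(2) matrix_mul_assoc)
  also have "\<dots> = Y ** matrix_inv Q"
    by (simp add: invertible_inv[OF assms(1)] matrix_mul_assoc)
  finally show ?thesis .
qed

lemma transpose_inv:
  assumes "invertible (A::'a::comm_ring_1^'n^'n)"
  shows "transpose (matrix_inv A) = matrix_inv (transpose A)"
proof -
  have inv: "invertible (transpose A)"
    using assms unfolding invertible_def
    by (metis matrix_transpose_mul transpose_mat)
  show ?thesis
    by (rule inv_unique[symmetric, OF inv]) (metis invertible_inv(1)[OF assms] matrix_transpose_mul transpose_mat)
qed

lemma transpose_add: "transpose (A + B) = transpose A + transpose B"
  by (simp add: transpose_def vec_eq_iff)

lemma transpose_diff: "transpose ((A::'a::ab_group_add^_^_) - B) = transpose A - transpose B"
  by (simp add: transpose_def vec_eq_iff)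

lemma cmat_mult: "cmat (X ** Y) = cmat X ** cmat Y"
  by (simp add: cmat_def vec_eq_iff matrix_matrix_mult_def)

lemma cmat_add: "cmat (X + Y) = cmat X + cmat Y"
  by (simp add: cmat_def vec_eq_iff)

lemma cmat_diff: "cmat (X - Y) = cmat X - cmat Y"
  by (simp add: cmat_def vec_eq_iff)

lemma cmat_transpose: "transpose (cmat X) = cmat (transpose X)"
  by (simp add: cmat_def vec_eq_iff transpose_def)

lemma cmat_one: "cmat (mat 1) = mat 1"
  by (simp add: cmat_def vec_eq_iff Finite_Cartesian_Product.mat_def)

lemma cmat_zero: "cmat 0 = 0"
  by (simp add: cmat_def vec_eq_iff)

lemma cmat_inj: "cmat X = cmat Y \<Longrightarrow> X = Y"
  by (simp add: cmat_def vec_eq_iff)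

lemma cmat_mpow: "cmat (mpow A k) = cpow (cmat A) k"
  by (induction k) (simp_all add: cmat_one cmat_mult)

lemma mpow_Suc2: "mpow A (Suc k) = mpow A k ** A"
  by (induction k) (simp_all add: matrix_mul_assoc)

lemma mpow_transpose: "mpow (transpose A) k = transpose (mpow A k)"
proof (induction k)
  case (Suc k)
  have "mpow (transpose A) (Suc k) = transpose A ** transpose (mpow A k)" by (simp add: Suc)
  also have "\<dots> = transpose (mpow A k ** A)" by (simp add: matrix_transpose_mul)
  finally show ?case by (simp only: mpow_Suc2)
qed simp

lemma cpow_transpose: "cpow (transpose A) k = transpose (cpow A k)"
proof (induction k)
  case (Suc k)
  have "cpow (transpose A) (Suc k) = transpose A ** transpose (cpow A k)" by (simp add: Suc)
  also have "\<dots> = transpose (cpow A k ** A)" by (simp add: matrix_transpose_mul)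
  finally show ?case by (simp only: cpow_Suc2)
qed simp

lemma cpow_commute: "A ** cpow A k = cpow A k ** A"
  by (metis cpow.simps(2) cpow_Suc2)




no_notation Matrix.vec_index (infixl \<open>$\<close> 100)

definition mn :: "'a::real_normed_algebra_1^'n^'m \<Rightarrow> real" where
  "mn X = (\<Sum>i\<in>UNIV. \<Sum>j\<in>UNIV. norm (X $ i $ j))"

definition vn :: "'a::real_normed_algebra_1^'n \<Rightarrow> real" where
  "vn v = (\<Sum>i\<in>UNIV. norm (v $ i))"

lemma mn_ge0: "0 \<le> mn X"
  by (simp add: mn_def sum_nonneg)

lemma vn_ge0: "0 \<le> vn X"
  by (simp add: vn_def sum_nonneg)

lemma mn_entry: "norm (X $ i $ j) \<le> mn X"
proof -
  have "norm (X $ i $ j) \<le> (\<Sum>j\<in>UNIV. norm (X $ i $ j))"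
    by (rule member_le_sum) auto
  also have "\<dots> \<le> mn X" unfolding mn_def
    by (rule member_le_sum) (auto intro: sum_nonneg)
  finally show ?thesis .
qed

lemma mn_row: "(\<Sum>j\<in>UNIV. norm (X $ i $ j)) \<le> mn X"
  unfolding mn_def by (rule member_le_sum) (auto intro: sum_nonneg)

lemma mn_mult: "mn ((X::'a::real_normed_algebra_1^'n^'m) ** Y) \<le> mn X * mn Y"
proof -
  have "mn (X ** Y) \<le> (\<Sum>i\<in>UNIV. \<Sum>j\<in>UNIV. \<Sum>k\<in>UNIV. norm (X $ i $ k) * norm (Y $ k $ j))"
    unfolding mn_def matrix_matrix_mult_def vec_lambda_beta
    by (intro sum_mono order.trans[OF norm_sum sum_mono[OF norm_mult_ineq]])
  also have "\<dots> = (\<Sum>i\<in>UNIV. \<Sum>k\<in>UNIV. norm (X $ i $ k) * (\<Sum>j\<in>UNIV. norm (Y $ k $ j)))"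
    by (simp add: sum_distrib_left) (rule sum.cong[OF refl], rule sum.swap)
  also have "\<dots> \<le> (\<Sum>i\<in>UNIV. \<Sum>k\<in>UNIV. norm (X $ i $ k) * mn Y)"
    by (auto intro!: sum_mono mult_left_mono mn_row)
  also have "\<dots> = mn X * mn Y"
    by (simp add: mn_def sum_distrib_right)
  finally show ?thesis .
qed

lemma vn_mult: "vn ((X::'a::real_normed_algebra_1^'n^'m) *v v) \<le> mn X * vn v"
proof -
  have "vn (X *v v) \<le> (\<Sum>i\<in>UNIV. \<Sum>k\<in>UNIV. norm (X $ i $ k) * norm (v $ k))"
    unfolding vn_def matrix_vector_mult_def vec_lambda_beta
    by (intro sum_mono order.trans[OF norm_sum sum_mono[OF norm_mult_ineq]])
  also have "\<dots> \<le> (\<Sum>i\<in>UNIV. \<Sum>k\<in>UNIV. norm (X $ i $ k) * vn v)"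
  proof (intro sum_mono mult_left_mono)
    fix k show "norm (v $ k) \<le> vn v" unfolding vn_def by (rule member_le_sum) auto
  qed simp
  also have "\<dots> = mn X * vn v"
    by (simp add: mn_def sum_distrib_right)
  finally show ?thesis .
qed

lemma mn_add: "mn (X + Y) \<le> mn X + mn Y"
proof -
  have "mn (X + Y) \<le> (\<Sum>i\<in>UNIV. \<Sum>j\<in>UNIV. norm (X $ i $ j) + norm (Y $ i $ j))"
    unfolding mn_def by (intro sum_mono) (simp add: norm_triangle_ineq)
  then show ?thesis by (simp add: mn_def sum.distrib)
qed

lemma mn_minus: "mn (- X) = mn X"
  unfolding mn_def by simp

lemma mn_diff: "mn (X - Y) \<le> mn X + mn Y"
  using mn_add[of X "-Y"] by (simp add: mn_minus)

lemma mn_eq0: "mn X = 0 \<Longrightarrow> X = 0"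
proof -
  assume "mn X = 0"
  then have "norm (X $ i $ j) = 0" for i j
    using mn_entry[of X i j] norm_ge_zero[of "X $ i $ j"] by linarith
  then show "X = 0" by (simp add: vec_eq_iff)
qed

lemma mn_le0: "mn X \<le> 0 \<Longrightarrow> X = 0"
  using mn_ge0[of X] mn_eq0[of X] by linarith

lemma vn_eq0: "vn v = 0 \<Longrightarrow> v = 0"
proof -
  assume "vn v = 0"
  then have "norm (v $ i) = 0" for i
  proof -
    have "norm (v $ i) \<le> vn v" unfolding vn_def by (rule member_le_sum) auto
    then show ?thesis using \<open>vn v = 0\<close> norm_ge_zero[of "v $ i"] by linarith
  qed
  then show "v = 0" by (simp add: vec_eq_iff)
qed

lemma mn_cmat: "mn (cmat X) = mn X"
  by (simp add: mn_def cmat_def)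

lemma mn_transpose: "mn (transpose X) = mn X"
proof -
  have "mn (transpose X) = (\<Sum>i\<in>UNIV. \<Sum>j\<in>UNIV. norm (X $ j $ i))"
    unfolding mn_def transpose_def by simp
  also have "\<dots> = mn X" unfolding mn_def by (rule sum.swap)
  finally show ?thesis .
qed

lemma lim_le0:
  fixes x C \<rho> :: real
  assumes "0 \<le> \<rho>" "\<rho> < 1" "\<And>N. N \<ge> N0 \<Longrightarrow> x \<le> C * \<rho> ^ N"
  shows "x \<le> 0"
proof -
  have "(\<lambda>N. C * \<rho> ^ N) \<longlonglongrightarrow> C * 0"
    by (intro tendsto_mult tendsto_const LIMSEQ_power_zero) (use assms in auto)
  then show ?thesis using assms(3) by (intro LIMSEQ_le_const[of "\<lambda>N. C * \<rho> ^ N"]) auto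
qed

lemma decay_real:
  fixes A :: "real^'n^'n"
  assumes "schur_stable A"
  shows "\<exists>K r. 0 \<le> K \<and> 0 < r \<and> r < 1 \<and> (\<forall>k. mn (cpow (cmat A) k) \<le> K * r ^ k)"
proof -
  from decay[of "cmat A"] assms obtain c r where cr: "0 < r" "r < 1"
    "\<And>k i j. cmod (cpow (cmat A) k $ i $ j) \<le> c * r ^ k"
    unfolding schur_stable_def by blast
  have c0: "0 \<le> c"
  proof -
    have "cmod (cpow (cmat A) 0 $ i $ j) \<le> c * r ^ 0" for i j by (rule cr(3))
    then show ?thesis using norm_ge_zero order.trans by (metis mult.right_neutral power_0)
  qed
  have "mn (cpow (cmat A) k) \<le> (real CARD('n) * real CARD('n) * c) * r ^ k" for k
  proof -
    have "mn (cpow (cmat A) k) \<le> (\<Sum>i\<in>(UNIV::'n set). \<Sum>j\<in>(UNIV::'n set). c * r ^ k)"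
      unfolding mn_def by (intro sum_mono cr(3))
    then show ?thesis by (simp add: mult_ac)
  qed
  then show ?thesis using cr c0 by (intro exI[of _ "real CARD('n) * real CARD('n) * c"] exI[of _ r]) auto
qed

lemma small_invertible:
  fixes Y :: "complex^'n^'n"
  assumes "mn Y < 1"
  shows "invertible (mat 1 - Y)"
proof -
  have "inj ((*v) (mat 1 - Y))"
  proof (rule injI)
    fix u v assume "(mat 1 - Y) *v u = (mat 1 - Y) *v v"
    then have "(mat 1 - Y) *v (u - v) = 0" by (simp add: matrix_vector_mult_diff_distrib)
    then have eq: "Y *v (u - v) = u - v" by (simp add: matrix_vector_mult_diff_rdistrib)
    have "vn (u - v) = vn (Y *v (u - v))" by (simp only: eq)
    also have "\<dots> \<le> mn Y * vn (u - v)" by (rule vn_mult)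
    finally have h: "vn (u - v) \<le> mn Y * vn (u - v)" .
    have "vn (u - v) = 0"
    proof (rule ccontr)
      assume "vn (u - v) \<noteq> 0"
      then have "vn (u - v) > 0" using vn_ge0[of "u - v"] by linarith
      then have "mn Y * vn (u - v) < 1 * vn (u - v)" by (rule mult_strict_right_mono[OF assms])
      then show False using h by simp
    qed
    then show "u = v" using vn_eq0[of "u - v"] by simp
  qed
  then have "det (mat 1 - Y) \<noteq> 0"
    using det_nz_iff_inj_gen[OF matrix_vector_mul_linear_gen[of "mat 1 - Y"]] by simp
  then show ?thesis using invertible_det_nz by blast
qed





lemma mn_mpow:
  fixes A :: "real^'n^'n"
  assumes "schur_stable A"
  shows "\<exists>K r. 0 \<le> K \<and> 0 < r \<and> r < 1 \<and> (\<forall>k. mn (mpow A k) \<le> K * r ^ k \<and>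
     mn (mpow (transpose A) k) \<le> K * r ^ k \<and> mn (cpow (cmat A) k) \<le> K * r ^ k \<and>
     mn (cpow (transpose (cmat A)) k) \<le> K * r ^ k)"
proof -
  obtain K r where Kr: "0 \<le> K" "0 < r" "r < 1" "\<And>k. mn (cpow (cmat A) k) \<le> K * r ^ k"
    using decay_real[OF assms] by blast
  have "mn (mpow A k) = mn (cpow (cmat A) k)" for k
    by (simp add: cmat_mpow[symmetric] mn_cmat)
  moreover have "mn (mpow (transpose A) k) = mn (mpow A k)" for k
    by (simp add: mpow_transpose mn_transpose)
  moreover have "mn (cpow (transpose (cmat A)) k) = mn (cpow (cmat A) k)" for k
    by (simp add: cpow_transpose mn_transpose)
  ultimately show ?thesis using Kr by (intro exI[of _ K] exI[of _ r]) auto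
qed

lemma stein_exists:
  fixes A1 :: "real^'n1^'n1" and A2 :: "real^'n2^'n2" and X :: "real^'n2^'n1"
  assumes st1: "schur_stable A1" and st2: "schur_stable A2"
  shows "\<exists>Z. transpose A1 ** Z ** A2 - Z = X"
proof -
  define L where "L = (\<lambda>Z::real^'n2^'n1. transpose A1 ** Z ** A2 - Z)"
  have lin: "linear L"
  proof (rule linearI)
    fix x y show "L (x + y) = L x + L y"
      by (simp add: L_def matrix_add_ldistrib matrix_add_rdistrib')
  next
    fix c :: real and x show "L (c *\<^sub>R x) = c *\<^sub>R L x"
      by (simp add: L_def matrix_scalar_ac scalar_matrix_assoc scaleR_right_diff_distrib)
  qed
  have inj: "inj L"
  proof -
    have "Z = 0" if LZ: "L Z = 0" for Z
    proof -
      let ?T = "transpose A1"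
      have Z1: "?T ** Z ** A2 = Z" using LZ by (simp add: L_def)
      have Zk: "mpow ?T k ** Z ** mpow A2 k = Z" for k
      proof (induction k)
        case (Suc k)
        have "mpow ?T (Suc k) ** Z ** mpow A2 (Suc k) = mpow ?T k ** (?T ** Z ** A2) ** mpow A2 k"
          by (simp only: mpow_Suc2[of ?T] mpow.simps(2)[of A2] matrix_mul_assoc)
        also have "\<dots> = Z" by (simp only: Z1 Suc)
        finally show ?case .
      qed simp
      obtain K1 r1 where K1: "0 \<le> K1" "0 < r1" "r1 < 1" "\<And>k. mn (mpow ?T k) \<le> K1 * r1 ^ k"
        using mn_mpow[OF st1] by blast
      obtain K2 r2 where K2: "0 \<le> K2" "0 < r2" "r2 < 1" "\<And>k. mn (mpow A2 k) \<le> K2 * r2 ^ k"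
        using mn_mpow[OF st2] by blast
      have "mn Z \<le> (K1 * K2 * mn Z) * (r1 * r2) ^ k" for k
      proof -
        have "mn Z = mn (mpow ?T k ** Z ** mpow A2 k)" by (simp only: Zk)
        also have "\<dots> \<le> mn (mpow ?T k ** Z) * mn (mpow A2 k)" by (rule mn_mult)
        also have "\<dots> \<le> (mn (mpow ?T k) * mn Z) * mn (mpow A2 k)"
          by (intro mult_right_mono mn_mult mn_ge0)
        also have "\<dots> \<le> (K1 * r1 ^ k * mn Z) * (K2 * r2 ^ k)"
          by (intro mult_mono K1(4) K2(4) mn_ge0 mult_nonneg_nonneg) (use K1 K2 in auto)
        also have "\<dots> = (K1 * K2 * mn Z) * (r1 * r2) ^ k" by (simp add: power_mult_distrib mult_ac)
        finally show ?thesis .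
      qed
      moreover have "r1 * r2 < 1"
      proof -
        have "r1 * r2 < 1 * r2" using K1 K2 by (intro mult_strict_right_mono) auto
        then show ?thesis using K2(3) by linarith
      qed
      moreover have "0 \<le> r1 * r2" using K1 K2 by simp
      ultimately have "mn Z \<le> 0"
        by (intro lim_le0[of "r1 * r2" 0 "mn Z" "K1 * K2 * mn Z"]) auto
      then show "Z = 0" by (rule mn_le0)
    qed
    note z = this
    show ?thesis
    proof (rule injI)
      fix x y assume "L x = L y"
      then have "L (x - y) = 0" using linear_diff[OF lin] by simp
      then show "x = y" using z[of "x - y"] by simp
    qed
  qed
  have "surj L" by (rule linear_injective_imp_surjective[OF lin inj]) (rule refl)
  then obtain Z where "X = L Z" by (metis surj_def)
  then have "transpose A1 ** Z ** A2 - Z = X" by (simp add: L_def)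
  then show ?thesis ..
qed





lemma mult_mat_right: "X ** mat (c::'a::comm_semiring_1) = smat c X"
proof -
  have "X ** mat c = X ** smat c (mat 1)"
    by (rule arg_cong[where f="\<lambda>M. X ** M"]) (simp add: vec_eq_iff Finite_Cartesian_Product.mat_def)
  then show ?thesis by (simp add: mult_smat_right)
qed

lemma matrix_neg_left: "(- A) ** (B::'a::ring_1^_^_) = - (A ** B)"
  by (simp add: vec_eq_iff matrix_matrix_mult_def sum_negf)

lemma matrix_neg_right: "(A::'a::ring_1^_^_) ** (- B) = - (A ** B)"
  by (simp add: vec_eq_iff matrix_matrix_mult_def sum_negf)

lemma smat_mat1: "smat c (mat 1) = mat (c::'a::comm_semiring_1)"
  by (simp add: vec_eq_iff Finite_Cartesian_Product.mat_def)

lemma smat_sum: "smat c (\<Sum>k\<in>S. F k) = (\<Sum>k\<in>S. smat c (F k))"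
  by (induction S rule: infinite_finite_induct) (simp_all add: smat_add vec_eq_iff)

definition ssum :: "complex^'n^'n \<Rightarrow> complex \<Rightarrow> nat \<Rightarrow> complex^'n^'n" where
  "ssum A u N = (\<Sum>k<N. smat (u ^ (N - 1 - k)) (cpow A k))"

lemma resolvent_geom:
  fixes A :: "complex^'n^'n"
  assumes inv: "invertible (mat u - A)" and uN: "u ^ N = 1"
  shows "matrix_inv (mat u - A) ** (mat 1 - cpow A N) = ssum A u N"
proof -
  define f where "f k = smat (u ^ (N - k)) (cpow A k)" for k
  have "(mat u - A) ** ssum A u N = (\<Sum>k<N. f k - f (Suc k))"
    unfolding ssum_def mult_sum_right
  proof (rule sum.cong[OF refl])
    fix k assume "k \<in> {..<N}"
    then have k: "k < N" by simp
    have "(mat u - A) ** smat (u ^ (N - 1 - k)) (cpow A k)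
        = smat (u * u ^ (N - 1 - k)) (cpow A k) - smat (u ^ (N - 1 - k)) (A ** cpow A k)"
      by (simp add: matrix_sub_rdistrib' mat_mult_left mult_smat_right smat_diff mult_ac)
    also have "\<dots> = f k - f (Suc k)"
      using k by (simp add: f_def power_Suc[symmetric] Suc_diff_Suc)
    finally show "(mat u - A) ** smat (u ^ (N - 1 - k)) (cpow A k) = f k - f (Suc k)" .
  qed
  also have "\<dots> = f 0 - f N" by (rule sum_lessThan_telescope')
  also have "\<dots> = mat 1 - cpow A N" by (simp add: f_def uN)
  finally have eq: "(mat u - A) ** ssum A u N = mat 1 - cpow A N" .
  have "matrix_inv (mat u - A) ** (mat 1 - cpow A N)
      = (matrix_inv (mat u - A) ** (mat u - A)) ** ssum A u N"
    by (simp add: eq[symmetric] matrix_mul_assoc)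
  also have "\<dots> = ssum A u N" by (simp add: invertible_inv(2)[OF inv])
  finally show ?thesis .
qed

lemma grp_aux: "Z - (a + Z) - (b + Z) = - Z - a - (b::'a::ab_group_add)"
  by (simp add: algebra_simps)

lemma key_identity:
  fixes T1 :: "'a::comm_ring_1^'n1^'n1" and A1 :: "'a^'n1^'n1"
    and R2 A2 :: "'a^'n2^'n2" and Z :: "'a^'n2^'n1"
    and B1 :: "'a^'n1^'k1" and C1 :: "'a^'m1^'n1" and D1 :: "'a^'m1^'k1"
    and M :: "'a^'m2^'m1" and C2 :: "'a^'n2^'m2" and B2 :: "'a^'k2^'n2" and D2 :: "'a^'k2^'m2"
  assumes h1: "T1 ** (mat w - A1) = mat 1" and h2: "(mat z - A2) ** R2 = mat 1"
    and wz: "w * z = 1" and hX: "A1 ** Z ** A2 - Z = C1 ** M ** C2"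
  shows "(B1 ** T1 ** C1 + D1) ** M ** (C2 ** R2 ** B2 + D2) =
     (D1 ** M ** D2 - B1 ** Z ** B2) + B1 ** T1 ** (C1 ** M ** D2 - A1 ** Z ** B2)
     + (D1 ** M ** C2 - B1 ** Z ** A2) ** R2 ** B2"
proof -
  have s1: "T1 ** A1 = smat w T1 - mat 1"
    using h1 by (simp add: matrix_sub_ldistrib' mult_mat_right algebra_simps)
  have s2: "A2 ** R2 = smat z R2 - mat 1"
    using h2 by (simp add: matrix_sub_rdistrib' mat_mult_left algebra_simps)
  have key: "T1 ** (C1 ** M ** C2) ** R2 = - Z - T1 ** A1 ** Z - Z ** A2 ** R2"
  proof -
    have "T1 ** (C1 ** M ** C2) ** R2 = (T1 ** A1) ** Z ** (A2 ** R2) - T1 ** Z ** R2"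
      by (simp add: hX[symmetric] matrix_sub_ldistrib' matrix_sub_rdistrib' matrix_mul_assoc)
    also have "\<dots> = (smat w T1 - mat 1) ** Z ** (smat z R2 - mat 1) - T1 ** Z ** R2"
      by (simp only: s1 s2)
    also have "\<dots> = smat (w * z) (T1 ** Z ** R2) - smat w (T1 ** Z) - smat z (Z ** R2) + Z
                   - T1 ** Z ** R2"
      by (simp add: matrix_sub_ldistrib' matrix_sub_rdistrib' smat_mult_left mult_smat_right
          matrix_mul_assoc smat_diff smat_add mult_ac algebra_simps)
    also have "\<dots> = Z - smat w (T1 ** Z) - smat z (Z ** R2)"
      by (simp add: wz)
    also have "smat w (T1 ** Z) = T1 ** A1 ** Z + Z"
      by (simp add: s1 matrix_sub_rdistrib' smat_mult_left)
    also have "smat z (Z ** R2) = Z ** A2 ** R2 + Z"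
    proof -
      have "Z ** A2 ** R2 = Z ** (A2 ** R2)" by (simp add: matrix_mul_assoc)
      also have "\<dots> = smat z (Z ** R2) - Z" by (simp add: s2 matrix_sub_ldistrib' mult_smat_right)
      finally show ?thesis by simp
    qed
    also have "Z - (T1 ** A1 ** Z + Z) - (Z ** A2 ** R2 + Z) = - Z - T1 ** A1 ** Z - Z ** A2 ** R2"
      by (rule grp_aux)
    finally show ?thesis .
  qed
  have "(B1 ** T1 ** C1 + D1) ** M ** (C2 ** R2 ** B2 + D2) =
     B1 ** (T1 ** (C1 ** M ** C2) ** R2) ** B2 + B1 ** T1 ** C1 ** M ** D2
     + D1 ** M ** C2 ** R2 ** B2 + D1 ** M ** D2"
    by (simp add: matrix_add_ldistrib matrix_add_rdistrib' matrix_mul_assoc algebra_simps)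
  also have "\<dots> = B1 ** (- Z - T1 ** A1 ** Z - Z ** A2 ** R2) ** B2 + B1 ** T1 ** C1 ** M ** D2
     + D1 ** M ** C2 ** R2 ** B2 + D1 ** M ** D2"
    by (simp only: key)
  also have "\<dots> = (D1 ** M ** D2 - B1 ** Z ** B2) + B1 ** T1 ** (C1 ** M ** D2 - A1 ** Z ** B2)
     + (D1 ** M ** C2 - B1 ** Z ** A2) ** R2 ** B2"
    by (simp add: matrix_sub_ldistrib' matrix_sub_rdistrib' matrix_neg_left matrix_neg_right
        matrix_add_ldistrib matrix_add_rdistrib' matrix_mul_assoc algebra_simps)
  finally show ?thesis .
qed





definition rt :: "nat \<Rightarrow> nat \<Rightarrow> complex" where
  "rt N j = exp (2 * of_real pi * \<i> * of_nat j / of_nat N)"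

lemma rt_pow: "rt N j ^ m = rt N (j * m)"
proof -
  have "rt N j ^ m = exp (of_nat m * (2 * of_real pi * \<i> * of_nat j / of_nat N))"
    unfolding rt_def by (rule exp_of_nat_mult[symmetric])
  also have "\<dots> = rt N (j * m)" unfolding rt_def by (simp add: mult_ac)
  finally show ?thesis .
qed

lemma rt_N: "N \<noteq> 0 \<Longrightarrow> rt N j ^ N = 1"
  unfolding rt_def by (rule complex_root_unity)

lemma rt_eq1: "1 \<le> N \<Longrightarrow> rt N m = 1 \<longleftrightarrow> N dvd m"
  unfolding rt_def by (rule complex_root_unity_eq_1)

lemma sumz: assumes "N \<ge> 1"
  shows "(\<Sum>j<N. rt N j ^ m) = (if N dvd m then of_nat N else 0)"
proof -
  have "(\<Sum>j<N. rt N j ^ m) = (\<Sum>j<N. rt N m ^ j)"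
    by (simp add: rt_pow mult.commute)
  also have "\<dots> = (if N dvd m then of_nat N else 0)"
  proof (cases "N dvd m")
    case True
    then have "rt N m = 1" using rt_eq1[OF assms] by simp
    then show ?thesis using True by simp
  next
    case False
    then have ne: "rt N m \<noteq> 1" using rt_eq1[OF assms] by simp
    have "(\<Sum>j<N. rt N m ^ j) = (rt N m ^ N - 1) / (rt N m - 1)" by (rule geometric_sum[OF ne])
    also have "rt N m ^ N = 1" using rt_N assms by simp
    finally show ?thesis using False by simp
  qed
  finally show ?thesis .
qed

lemma dvd_window: "0 < (x::nat) \<Longrightarrow> x < 2 * N \<Longrightarrow> N dvd x \<longleftrightarrow> x = N"
proof
  assume x: "0 < x" "x < 2 * N" and "N dvd x"
  then obtain q where q: "x = N * q" by (auto simp: dvd_def)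
  have "q \<noteq> 0" using x q by auto
  moreover have "q < 2" using x q by (metis mult.commute nat_mult_less_cancel_disj)
  ultimately have "q = 1" by linarith
  then show "x = N" using q by simp
qed simp

lemma extract_coef:
  fixes U V :: "nat \<Rightarrow> complex" and g :: complex
  assumes nN: "n + 2 \<le> N"
    and eq: "\<And>z. z ^ N = 1 \<Longrightarrow> g + (\<Sum>k<N. z ^ (k + 1) * U k) + (\<Sum>k<N. z ^ (N - 1 - k) * V k) = 0"
  shows "U n + V (N - 2 - n) = 0"
proof -
  have N1: "N \<ge> 1" using nN by simp
  define a where "a = N - n - 1"
  have "0 = (\<Sum>j<N. rt N j ^ a * (g + (\<Sum>k<N. rt N j ^ (k + 1) * U k) + (\<Sum>k<N. rt N j ^ (N - 1 - k) * V k)))"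
    using eq rt_N N1 by simp
  also have "\<dots> = g * (\<Sum>j<N. rt N j ^ a) + (\<Sum>k<N. U k * (\<Sum>j<N. rt N j ^ (a + (k + 1))))
       + (\<Sum>k<N. V k * (\<Sum>j<N. rt N j ^ (a + (N - 1 - k))))"
  proof -
    have s1: "(\<Sum>j<N. rt N j ^ a * (\<Sum>k<N. rt N j ^ (k + 1) * U k))
        = (\<Sum>k<N. U k * (\<Sum>j<N. rt N j ^ (a + (k + 1))))"
    proof -
      have "(\<Sum>j<N. rt N j ^ a * (\<Sum>k<N. rt N j ^ (k + 1) * U k))
          = (\<Sum>j<N. \<Sum>k<N. U k * (rt N j ^ a * rt N j ^ (k + 1)))"
        by (simp add: sum_distrib_left mult_ac)
      also have "\<dots> = (\<Sum>j<N. \<Sum>k<N. U k * rt N j ^ (a + (k + 1)))"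
        by (simp only: power_add)
      also have "\<dots> = (\<Sum>k<N. \<Sum>j<N. U k * rt N j ^ (a + (k + 1)))"
        by (rule sum.swap)
      also have "\<dots> = (\<Sum>k<N. U k * (\<Sum>j<N. rt N j ^ (a + (k + 1))))"
        by (simp add: sum_distrib_left)
      finally show ?thesis .
    qed
    have s2: "(\<Sum>j<N. rt N j ^ a * (\<Sum>k<N. rt N j ^ (N - 1 - k) * V k))
        = (\<Sum>k<N. V k * (\<Sum>j<N. rt N j ^ (a + (N - 1 - k))))"
    proof -
      have "(\<Sum>j<N. rt N j ^ a * (\<Sum>k<N. rt N j ^ (N - 1 - k) * V k))
          = (\<Sum>j<N. \<Sum>k<N. V k * (rt N j ^ a * rt N j ^ (N - 1 - k)))"
        by (simp add: sum_distrib_left mult_ac)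
      also have "\<dots> = (\<Sum>j<N. \<Sum>k<N. V k * rt N j ^ (a + (N - 1 - k)))"
        by (simp only: power_add)
      also have "\<dots> = (\<Sum>k<N. \<Sum>j<N. V k * rt N j ^ (a + (N - 1 - k)))"
        by (rule sum.swap)
      also have "\<dots> = (\<Sum>k<N. V k * (\<Sum>j<N. rt N j ^ (a + (N - 1 - k))))"
        by (simp add: sum_distrib_left)
      finally show ?thesis .
    qed
    have "(\<Sum>j<N. rt N j ^ a * (g + (\<Sum>k<N. rt N j ^ (k + 1) * U k) + (\<Sum>k<N. rt N j ^ (N - 1 - k) * V k)))
       = (\<Sum>j<N. g * rt N j ^ a) + (\<Sum>j<N. rt N j ^ a * (\<Sum>k<N. rt N j ^ (k + 1) * U k))
         + (\<Sum>j<N. rt N j ^ a * (\<Sum>k<N. rt N j ^ (N - 1 - k) * V k))"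
      by (simp add: distrib_left sum.distrib mult.commute)
    note eq3 = this
    show ?thesis unfolding eq3 s1 s2 by (simp add: sum_distrib_left)
  qed
  also have "\<dots> = g * (if N dvd a then of_nat N else 0)
      + (\<Sum>k<N. U k * (if N dvd (a + (k + 1)) then of_nat N else 0))
      + (\<Sum>k<N. V k * (if N dvd (a + (N - 1 - k)) then of_nat N else 0))"
    by (simp only: sumz[OF N1])
  also have "\<dots> = of_nat N * U n + of_nat N * V (N - 2 - n)"
  proof -
    have "\<not> N dvd a" using nN by (intro nat_dvd_not_less) (auto simp: a_def)
    moreover have "(\<Sum>k<N. U k * (if N dvd (a + (k + 1)) then of_nat N else 0)) = of_nat N * U n"
    proof -
      have "(\<Sum>k<N. U k * (if N dvd (a + (k + 1)) then of_nat N else 0))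
          = (\<Sum>k<N. if k = n then U k * of_nat N else 0)"
      proof (rule sum.cong[OF refl])
        fix k assume "k \<in> {..<N}"
        then have "N dvd (a + (k + 1)) \<longleftrightarrow> a + (k + 1) = N"
          using nN by (intro dvd_window) (auto simp: a_def)
        also have "\<dots> \<longleftrightarrow> k = n" using nN by (auto simp: a_def)
        finally show "U k * (if N dvd (a + (k + 1)) then of_nat N else 0) = (if k = n then U k * of_nat N else 0)"
          by simp
      qed
      also have "\<dots> = of_nat N * U n" using nN by (simp add: mult.commute)
      finally show ?thesis .
    qed
    moreover have "(\<Sum>k<N. V k * (if N dvd (a + (N - 1 - k)) then of_nat N else 0)) = of_nat N * V (N - 2 - n)"
    proof -
      have "(\<Sum>k<N. V k * (if N dvd (a + (N - 1 - k)) then of_nat N else 0))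
          = (\<Sum>k<N. if k = N - 2 - n then V k * of_nat N else 0)"
      proof (rule sum.cong[OF refl])
        fix k assume "k \<in> {..<N}"
        then have "N dvd (a + (N - 1 - k)) \<longleftrightarrow> a + (N - 1 - k) = N"
          using nN by (intro dvd_window) (auto simp: a_def)
        also have "\<dots> \<longleftrightarrow> k = N - 2 - n" using nN \<open>k \<in> {..<N}\<close> by (auto simp: a_def)
        finally show "V k * (if N dvd (a + (N - 1 - k)) then of_nat N else 0) = (if k = N - 2 - n then V k * of_nat N else 0)"
          by simp
      qed
      also have "\<dots> = of_nat N * V (N - 2 - n)" using nN by (simp add: mult.commute)
      finally show ?thesis .
    qed
    ultimately show ?thesis by simp
  qed
  finally have "of_nat N * (U n + V (N - 2 - n)) = 0" by (simp add: distrib_left)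
  then show ?thesis using N1 by simp
qed





lemma entry_ssum:
  "(b ** ssum A u N ** e') $ p $ q = (\<Sum>k<N. u ^ (N - 1 - k) * (b ** cpow A k ** e') $ p $ q)"
proof -
  have "b ** ssum A u N ** e' = (\<Sum>k<N. smat (u ^ (N - 1 - k)) (b ** cpow A k ** e'))"
    unfolding ssum_def mult_sum_right sum_mult_left
    by (simp add: mult_smat_right smat_mult_left)
  then show ?thesis by simp
qed

lemma inv_pow_root:
  fixes z :: complex
  assumes "z ^ N = 1" "k < N"
  shows "inverse z ^ (N - 1 - k) = z ^ (k + 1)"
proof -
  have z0: "z \<noteq> 0" using assms by (metis power_0_left zero_neq_one less_nat_zero_code not_gr_zero)
  have ex: "k + 1 + (N - 1 - k) = N" using assms by simp
  have "z ^ (k + 1) * z ^ (N - 1 - k) = 1"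
    using assms(1) by (metis ex power_add)
  then show ?thesis using z0 by (simp add: power_inverse field_simps)
qed

lemma solve_bound:
  fixes Y :: "complex^'n^'n" and e :: "complex^'k^'n"
  assumes Y: "mn Y \<le> 1/2" and P: "(mat 1 - Y) ** eN = e"
  shows "mn eN \<le> 2 * mn e" "mn (eN - e) \<le> 2 * mn Y * mn e"
proof -
  have h: "eN - Y ** eN = e" using P by (simp add: matrix_sub_rdistrib')
  have d: "eN - e = Y ** eN" by (simp add: h[symmetric])
  have "mn eN = mn (e + Y ** eN)" using d by (metis diff_add_cancel add.commute)
  also have "\<dots> \<le> mn e + mn Y * mn eN" by (intro order.trans[OF mn_add] add_left_mono mn_mult)
  also have "\<dots> \<le> mn e + 1/2 * mn eN" by (intro add_left_mono mult_right_mono Y mn_ge0)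
  finally show b: "mn eN \<le> 2 * mn e" by simp
  have "mn (eN - e) \<le> mn Y * mn eN" unfolding d by (rule mn_mult)
  also have "\<dots> \<le> mn Y * (2 * mn e)" by (intro mult_left_mono b mn_ge0)
  finally show "mn (eN - e) \<le> 2 * mn Y * mn e" by simp
qed

lemma mn_mult3: "mn ((X::'a::real_normed_algebra_1^_^_) ** Y ** Z) \<le> mn X * mn Y * mn Z"
  by (meson mn_ge0 mn_mult mult_right_mono order_trans)

lemma coef_vanish:
  fixes Ap :: "complex^'n1^'n1" and Aq :: "complex^'n2^'n2" and b :: "complex^'n1^'k1"
    and e :: "complex^'k2^'n1" and f :: "complex^'n2^'k1" and c :: "complex^'k2^'n2"
    and g :: "complex^'k2^'k1"
  assumes inv1: "\<And>z. cmod z = 1 \<Longrightarrow> invertible (mat z - Ap)"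
    and inv2: "\<And>z. cmod z = 1 \<Longrightarrow> invertible (mat z - Aq)"
    and eq: "\<And>z. cmod z = 1 \<Longrightarrow>
       g + b ** matrix_inv (mat (inverse z) - Ap) ** e + f ** matrix_inv (mat z - Aq) ** c = 0"
    and r: "0 < r" "r < 1" and K: "0 \<le> K"
    and d1: "\<And>k. mn (cpow Ap k) \<le> K * r ^ k" and d2: "\<And>k. mn (cpow Aq k) \<le> K * r ^ k"
  shows "b ** cpow Ap n ** e = 0 \<and> f ** cpow Aq n ** c = 0"
proof -
  have "(\<lambda>N. K * r ^ N) \<longlonglongrightarrow> K * 0"
    by (intro tendsto_mult tendsto_const LIMSEQ_power_zero) (use r in auto)
  from LIMSEQ_D[OF this, of "1/2"]
  obtain N1 where N1: "\<And>N. N \<ge> N1 \<Longrightarrow> norm (K * r ^ N - K * 0) < 1/2"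
    by auto
  define N0 where "N0 = max N1 (n + 2)"
  have rel: "\<exists>eN cN. mn eN \<le> 2 * mn e \<and> mn (eN - e) \<le> 2 * (K * r ^ N) * mn e
     \<and> mn cN \<le> 2 * mn c \<and> mn (cN - c) \<le> 2 * (K * r ^ N) * mn c
     \<and> b ** cpow Ap n ** eN + f ** cpow Aq (N - 2 - n) ** cN = 0
     \<and> b ** cpow Ap (N - 2 - n) ** eN + f ** cpow Aq n ** cN = 0" if N: "N \<ge> N0" for N
  proof -
    have nN: "n + 2 \<le> N" and NN1: "N \<ge> N1" using N by (auto simp: N0_def)
    have small: "K * r ^ N \<le> 1/2" using N1[OF NN1] r K by simp
    have m1: "mn (cpow Ap N) \<le> 1/2" using d1[of N] small by linarith
    have m2: "mn (cpow Aq N) \<le> 1/2" using d2[of N] small by linarith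
    define P1 where "P1 = mat 1 - cpow Ap N"
    define P2 where "P2 = mat 1 - cpow Aq N"
    have iP1: "invertible P1" unfolding P1_def by (rule small_invertible) (use m1 in linarith)
    have iP2: "invertible P2" unfolding P2_def by (rule small_invertible) (use m2 in linarith)
    define eN where "eN = matrix_inv P1 ** e"
    define cN where "cN = matrix_inv P2 ** c"
    have PeN: "P1 ** eN = e" by (simp add: eN_def matrix_mul_assoc invertible_inv(1)[OF iP1])
    have PcN: "P2 ** cN = c" by (simp add: cN_def matrix_mul_assoc invertible_inv(1)[OF iP2])
    have be1: "mn eN \<le> 2 * mn e" "mn (eN - e) \<le> 2 * mn (cpow Ap N) * mn e"
      using solve_bound[OF m1, of eN e] PeN unfolding P1_def by auto
    have be2: "mn cN \<le> 2 * mn c" "mn (cN - c) \<le> 2 * mn (cpow Aq N) * mn c"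
      using solve_bound[OF m2, of cN c] PcN unfolding P2_def by auto
    have be1': "mn (eN - e) \<le> 2 * (K * r ^ N) * mn e"
      by (rule order.trans[OF be1(2)]) (intro mult_right_mono mult_left_mono d1 mn_ge0; simp)
    have be2': "mn (cN - c) \<le> 2 * (K * r ^ N) * mn c"
      by (rule order.trans[OF be2(2)]) (intro mult_right_mono mult_left_mono d2 mn_ge0; simp)
    have scal: "g $ p $ q + (\<Sum>k<N. z ^ (k + 1) * (b ** cpow Ap k ** eN) $ p $ q)
        + (\<Sum>k<N. z ^ (N - 1 - k) * (f ** cpow Aq k ** cN) $ p $ q) = 0"
      if zN: "z ^ N = 1" for z p q
    proof -
      have z1: "cmod z = 1" using power_eq_1_iff[OF zN] nN by auto
      have zi: "cmod (inverse z) = 1" using z1 by (simp add: norm_inverse)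
      have ziN: "inverse z ^ N = 1" using zN by (simp add: power_inverse)
      have "b ** matrix_inv (mat (inverse z) - Ap) ** e = b ** ssum Ap (inverse z) N ** eN"
      proof -
        have "b ** matrix_inv (mat (inverse z) - Ap) ** e
            = b ** (matrix_inv (mat (inverse z) - Ap) ** P1) ** eN"
          by (simp add: PeN[symmetric] matrix_mul_assoc)
        also have "\<dots> = b ** ssum Ap (inverse z) N ** eN"
          unfolding P1_def by (simp only: resolvent_geom[OF inv1[OF zi] ziN])
        finally show ?thesis .
      qed
      moreover have "f ** matrix_inv (mat z - Aq) ** c = f ** ssum Aq z N ** cN"
      proof -
        have "f ** matrix_inv (mat z - Aq) ** c = f ** (matrix_inv (mat z - Aq) ** P2) ** cN"
          by (simp add: PcN[symmetric] matrix_mul_assoc)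
        also have "\<dots> = f ** ssum Aq z N ** cN"
          unfolding P2_def by (simp only: resolvent_geom[OF inv2[OF z1] zN])
        finally show ?thesis .
      qed
      ultimately have "g + b ** ssum Ap (inverse z) N ** eN + f ** ssum Aq z N ** cN = 0"
        using eq[OF z1] by simp
      then have "(g + b ** ssum Ap (inverse z) N ** eN + f ** ssum Aq z N ** cN) $ p $ q = 0"
        by simp
      then have "g $ p $ q + (\<Sum>k<N. inverse z ^ (N - 1 - k) * (b ** cpow Ap k ** eN) $ p $ q)
        + (\<Sum>k<N. z ^ (N - 1 - k) * (f ** cpow Aq k ** cN) $ p $ q) = 0"
        by (simp only: entry_ssum vector_add_component)
      moreover have "(\<Sum>k<N. inverse z ^ (N - 1 - k) * (b ** cpow Ap k ** eN) $ p $ q)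
          = (\<Sum>k<N. z ^ (k + 1) * (b ** cpow Ap k ** eN) $ p $ q)"
        by (rule sum.cong[OF refl]) (simp only: inv_pow_root[OF zN] lessThan_iff)
      ultimately show ?thesis by simp
    qed
    have e1: "(b ** cpow Ap n ** eN + f ** cpow Aq (N - 2 - n) ** cN) $ p $ q = 0" for p q
      using extract_coef[OF nN scal[of _ p q]] by simp
    have nN': "(N - 2 - n) + 2 \<le> N" using nN by simp
    have e2: "(b ** cpow Ap (N - 2 - n) ** eN + f ** cpow Aq n ** cN) $ p $ q = 0" for p q
    proof -
      have "N - 2 - (N - 2 - n) = n" using nN by simp
      then show ?thesis using extract_coef[OF nN' scal[of _ p q]] by simp
    qed
    show ?thesis
      by (intro exI[of _ eN] exI[of _ cN] conjI be1(1) be1' be2(1) be2')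
         (use e1 e2 in \<open>simp_all add: vec_eq_iff\<close>)
  qed
  have rn: "0 \<le> r" using r by simp
  define C1 where "C1 = mn f * (K / r ^ (n + 2)) * (2 * mn c) + mn (b ** cpow Ap n) * (2 * K * mn e)"
  have "mn (b ** cpow Ap n ** e) \<le> C1 * r ^ N" if N: "N \<ge> N0" for N
  proof -
    obtain eN cN where H: "mn eN \<le> 2 * mn e" "mn (eN - e) \<le> 2 * (K * r ^ N) * mn e"
      "mn cN \<le> 2 * mn c" "b ** cpow Ap n ** eN + f ** cpow Aq (N - 2 - n) ** cN = 0"
      using rel[OF N] by blast
    have nN: "n + 2 \<le> N" using N by (auto simp: N0_def)
    have pw: "r ^ (N - 2 - n) = r ^ N / r ^ (n + 2)"
      using nN r by (simp add: power_diff)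
    have "b ** cpow Ap n ** e = - (f ** cpow Aq (N - 2 - n) ** cN) - b ** cpow Ap n ** (eN - e)"
      using H(4) by (simp add: matrix_sub_ldistrib' eq_neg_iff_add_eq_0 algebra_simps)
    then have "mn (b ** cpow Ap n ** e) \<le> mn (f ** cpow Aq (N - 2 - n) ** cN) + mn (b ** cpow Ap n ** (eN - e))"
      by (metis mn_diff mn_minus)
    also have "\<dots> \<le> mn f * (K * r ^ (N - 2 - n)) * (2 * mn c) + mn (b ** cpow Ap n) * (2 * (K * r ^ N) * mn e)"
      by (intro add_mono order.trans[OF mn_mult3] order.trans[OF mn_mult] mult_mono mult_left_mono
          d2 H(1) H(2) H(3) mn_ge0 mult_nonneg_nonneg) (use K r in auto)
    also have "\<dots> = C1 * r ^ N" unfolding C1_def pw by (simp add: field_simps)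
    finally show ?thesis .
  qed
  then have A: "b ** cpow Ap n ** e = 0"
    by (intro mn_le0 lim_le0[OF rn r(2)]) auto
  define C2 where "C2 = mn b * (K / r ^ (n + 2)) * (2 * mn e) + mn (f ** cpow Aq n) * (2 * K * mn c)"
  have "mn (f ** cpow Aq n ** c) \<le> C2 * r ^ N" if N: "N \<ge> N0" for N
  proof -
    obtain eN cN where H: "mn eN \<le> 2 * mn e" "mn (cN - c) \<le> 2 * (K * r ^ N) * mn c"
      "b ** cpow Ap (N - 2 - n) ** eN + f ** cpow Aq n ** cN = 0"
      using rel[OF N] by blast
    have nN: "n + 2 \<le> N" using N by (auto simp: N0_def)
    have pw: "r ^ (N - 2 - n) = r ^ N / r ^ (n + 2)"
      using nN r by (simp add: power_diff)
    have "f ** cpow Aq n ** c = - (b ** cpow Ap (N - 2 - n) ** eN) - f ** cpow Aq n ** (cN - c)"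
      using H(3) by (simp add: matrix_sub_ldistrib' eq_neg_iff_add_eq_0 algebra_simps)
    then have "mn (f ** cpow Aq n ** c) \<le> mn (b ** cpow Ap (N - 2 - n) ** eN) + mn (f ** cpow Aq n ** (cN - c))"
      by (metis mn_diff mn_minus)
    also have "\<dots> \<le> mn b * (K * r ^ (N - 2 - n)) * (2 * mn e) + mn (f ** cpow Aq n) * (2 * (K * r ^ N) * mn c)"
      by (intro add_mono order.trans[OF mn_mult3] order.trans[OF mn_mult] mult_mono mult_left_mono
          d1 H(1) H(2) mn_ge0 mult_nonneg_nonneg) (use K r in auto)
    also have "\<dots> = C2 * r ^ N" unfolding C2_def pw by (simp add: field_simps)
    finally show ?thesis .
  qed
  then have B: "f ** cpow Aq n ** c = 0"
    by (intro mn_le0 lim_le0[OF rn r(2)]) auto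
  from A B show ?thesis ..
qed





lemma column_mult: "Y *v column i X = column i (Y ** X)"
  by (simp add: vec_eq_iff matrix_vector_mult_def matrix_matrix_mult_def column_def)

lemma ctrb_zero:
  fixes A :: "real^'n^'n" and B :: "real^'k^'n" and Y :: "real^'n^'p"
  assumes ctrb: "controllable A B" and h: "\<And>j. Y ** mpow A j ** B = 0"
  shows "Y = 0"
proof -
  let ?S = "{column i (mpow A j ** B) | i j. j < CARD('n)}"
  have S: "Y *v v = 0" if "v \<in> ?S" for v
  proof -
    from that obtain i j where v: "v = column i (mpow A j ** B)" by blast
    then have "Y *v v = column i (Y ** mpow A j ** B)" by (simp add: column_mult matrix_mul_assoc)
    also have "\<dots> = 0" by (simp add: h column_def vec_eq_iff)
    finally show ?thesis .
  qed
  have "Y *v x = 0" for x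
  proof -
    have "x \<in> Real_Vector_Spaces.span ?S" using ctrb unfolding controllable_def by simp
    then show ?thesis using linear_eq_0_on_span[OF matrix_vector_mul_linear[of Y], of ?S] S by blast
  qed
  then have "\<forall>x. Y *v x = 0 *v x" by simp
  then show ?thesis using matrix_eq by blast
qed


lemma transpose_zero': "transpose 0 = (0::'a::zero^'n^'m)"
  by (simp add: transpose_def vec_eq_iff)

lemma stable_inv:
  fixes A :: "real^'n^'n"
  assumes "schur_stable A" "cmod z = 1"
  shows "invertible (mat z - cmat A)" "invertible (mat z - transpose (cmat A))"
proof -
  have "det (mat z - cmat A) \<noteq> 0" using assms unfolding schur_stable_def by force
  then show i: "invertible (mat z - cmat A)" using invertible_det_nz by blast
  have "transpose (mat z - cmat A) = mat z - transpose (cmat A)"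
    by (simp add: transpose_diff)
  moreover have "det (transpose (mat z - cmat A)) \<noteq> 0"
    using \<open>det (mat z - cmat A) \<noteq> 0\<close> by simp
  ultimately show "invertible (mat z - transpose (cmat A))" using invertible_det_nz by metis
qed

theorem lemmaA2:
  fixes A1 :: "real^'n1^'n1" and B1 :: "real^'k1^'n1"
    and C1 :: "real^'n1^'m1" and D1 :: "real^'k1^'m1"
    and A2 :: "real^'n2^'n2" and B2 :: "real^'k2^'n2"
    and C2 :: "real^'n2^'m2" and D2 :: "real^'k2^'m2"
    and M :: "real^'m2^'m1"
  assumes stab1: "schur_stable A1" and stab2: "schur_stable A2"
    and zero: "\<And>z. cmod z = 1 \<Longrightarrow>
        transpose (tf A1 B1 C1 D1 (inverse z)) ** cmat M ** tf A2 B2 C2 D2 z = 0"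
    and ctrb1: "controllable A1 B1" and ctrb2: "controllable A2 B2"
  shows "\<exists>Z :: real^'n2^'n1.
           transpose A1 ** Z ** A2 - Z = transpose C1 ** M ** C2 \<and>
           transpose A1 ** Z ** B2 = transpose C1 ** M ** D2 \<and>
           transpose B1 ** Z ** A2 = transpose D1 ** M ** C2 \<and>
           transpose B1 ** Z ** B2 = transpose D1 ** M ** D2"
proof -
  obtain Z where Zs: "transpose A1 ** Z ** A2 - Z = transpose C1 ** M ** C2"
    using stein_exists[OF stab1 stab2] by blast
  define E where "E = transpose C1 ** M ** D2 - transpose A1 ** Z ** B2"
  define F where "F = transpose D1 ** M ** C2 - transpose B1 ** Z ** A2"
  define G where "G = transpose D1 ** M ** D2 - transpose B1 ** Z ** B2"
  define Ap where "Ap = transpose (cmat A1)"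
  define Aq where "Aq = cmat A2"
  have inv1: "invertible (mat z - Ap)" if "cmod z = 1" for z
    unfolding Ap_def by (rule stable_inv(2)[OF stab1 that])
  have inv2: "invertible (mat z - Aq)" if "cmod z = 1" for z
    unfolding Aq_def by (rule stable_inv(1)[OF stab2 that])
  have eq: "cmat G + cmat (transpose B1) ** matrix_inv (mat (inverse z) - Ap) ** cmat E
      + cmat F ** matrix_inv (mat z - Aq) ** cmat B2 = 0" if z1: "cmod z = 1" for z
  proof -
    define w where "w = inverse z"
    have w1: "cmod w = 1" using z1 by (simp add: w_def norm_inverse)
    have z0: "z \<noteq> 0" using z1 by auto
    define T1 where "T1 = matrix_inv (mat w - Ap)"
    define R2 where "R2 = matrix_inv (mat z - Aq)"
    have tT: "transpose (matrix_inv (mat w - cmat A1)) = T1"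
    proof -
      have "transpose (matrix_inv (mat w - cmat A1)) = matrix_inv (transpose (mat w - cmat A1))"
        by (rule transpose_inv[OF stable_inv(1)[OF stab1 w1]])
      also have "transpose (mat w - cmat A1) = mat w - Ap"
        by (simp add: Ap_def transpose_diff)
      finally show ?thesis by (simp add: T1_def)
    qed
    have tf1: "transpose (tf A1 B1 C1 D1 w) =
        cmat (transpose B1) ** T1 ** cmat (transpose C1) + cmat (transpose D1)"
      unfolding tf_def by (simp add: transpose_add matrix_transpose_mul tT cmat_transpose matrix_mul_assoc)
    have tf2: "tf A2 B2 C2 D2 z = cmat C2 ** R2 ** cmat B2 + cmat D2"
      unfolding tf_def R2_def Aq_def ..
    have h1: "T1 ** (mat w - Ap) = mat 1"
      unfolding T1_def by (rule invertible_inv(2)[OF inv1[OF w1]])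
    have h2: "(mat z - Aq) ** R2 = mat 1"
      unfolding R2_def by (rule invertible_inv(1)[OF inv2[OF z1]])
    have wz: "w * z = 1" using z0 by (simp add: w_def)
    have hX: "Ap ** cmat Z ** Aq - cmat Z = cmat (transpose C1) ** cmat M ** cmat C2"
    proof -
      have "cmat (transpose A1 ** Z ** A2 - Z) = cmat (transpose C1 ** M ** C2)" by (simp only: Zs)
      then show ?thesis by (simp add: cmat_mult cmat_diff Ap_def Aq_def cmat_transpose)
    qed
    have "0 = transpose (tf A1 B1 C1 D1 w) ** cmat M ** tf A2 B2 C2 D2 z"
      using zero[OF z1] by (simp add: w_def)
    also have "\<dots> = (cmat (transpose B1) ** T1 ** cmat (transpose C1) + cmat (transpose D1)) ** cmat M
        ** (cmat C2 ** R2 ** cmat B2 + cmat D2)" by (simp only: tf1 tf2)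
    also have "\<dots> = (cmat (transpose D1) ** cmat M ** cmat D2 - cmat (transpose B1) ** cmat Z ** cmat B2)
       + cmat (transpose B1) ** T1 ** (cmat (transpose C1) ** cmat M ** cmat D2 - Ap ** cmat Z ** cmat B2)
       + (cmat (transpose D1) ** cmat M ** cmat C2 - cmat (transpose B1) ** cmat Z ** Aq) ** R2 ** cmat B2"
      by (rule key_identity[OF h1 h2 wz hX])
    also have "\<dots> = cmat G + cmat (transpose B1) ** T1 ** cmat E + cmat F ** R2 ** cmat B2"
      by (simp add: G_def E_def F_def cmat_mult cmat_diff Ap_def Aq_def cmat_transpose)
    finally show ?thesis by (simp add: T1_def R2_def w_def)
  qed
  obtain K1 r1 where K1: "0 \<le> K1" "0 < r1" "r1 < 1" "\<And>k. mn (cpow (transpose (cmat A1)) k) \<le> K1 * r1 ^ k"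
    using mn_mpow[OF stab1] by blast
  obtain K2 r2 where K2: "0 \<le> K2" "0 < r2" "r2 < 1" "\<And>k. mn (cpow (cmat A2) k) \<le> K2 * r2 ^ k"
    using mn_mpow[OF stab2] by blast
  define K where "K = max K1 K2"
  define r where "r = max r1 r2"
  have r: "0 < r" "r < 1" and K: "0 \<le> K" using K1 K2 by (auto simp: r_def K_def)
  have d1: "mn (cpow Ap k) \<le> K * r ^ k" for k
  proof -
    have "K1 * r1 ^ k \<le> K * r ^ k"
      using K1 K2 by (intro mult_mono power_mono) (auto simp: K_def r_def)
    then show ?thesis using K1(4)[of k] by (simp add: Ap_def)
  qed
  have d2: "mn (cpow Aq k) \<le> K * r ^ k" for k
  proof -
    have "K2 * r2 ^ k \<le> K * r ^ k"
      using K1 K2 by (intro mult_mono power_mono) (auto simp: K_def r_def)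
    then show ?thesis using K2(4)[of k] by (simp add: Aq_def)
  qed
  have cv: "cmat (transpose B1) ** cpow Ap n ** cmat E = 0 \<and> cmat F ** cpow Aq n ** cmat B2 = 0" for n
    by (rule coef_vanish[OF inv1 inv2 eq r K d1 d2])
  have E0: "E = 0"
  proof -
    have "transpose E ** mpow A1 j ** B1 = 0" for j
    proof -
      have "cmat (transpose B1 ** mpow (transpose A1) j ** E) = cmat 0"
        using cv[of j] by (simp add: cmat_mult cmat_mpow Ap_def cmat_transpose cmat_zero)
      then have "transpose B1 ** mpow (transpose A1) j ** E = 0" by (rule cmat_inj)
      then have "transpose (transpose B1 ** mpow (transpose A1) j ** E) = 0" by (simp add: transpose_zero')
      then show ?thesis by (simp add: matrix_transpose_mul mpow_transpose matrix_mul_assoc)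
    qed
    then have "transpose E = 0" by (rule ctrb_zero[OF ctrb1])
    then have "transpose (transpose E) = transpose 0" by simp
    then show ?thesis by (simp add: transpose_zero')
  qed
  have F0: "F = 0"
  proof -
    have "F ** mpow A2 j ** B2 = 0" for j
    proof -
      have "cmat (F ** mpow A2 j ** B2) = cmat 0"
        using cv[of j] by (simp add: cmat_mult cmat_mpow Aq_def cmat_zero)
      then show ?thesis by (rule cmat_inj)
    qed
    then show ?thesis by (rule ctrb_zero[OF ctrb2])
  qed
  have G0: "G = 0"
  proof -
    have "cmat G = 0" using eq[of 1] by (simp add: E0 F0 cmat_zero)
    then have "cmat G = cmat 0" by (simp add: cmat_zero)
    then show ?thesis by (rule cmat_inj)
  qed
  show ?thesis
    using Zs E0 F0 G0 by (intro exI[of _ Z]) (simp add: E_def F_def G_def)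
qed


end
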